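(* Let $n\ge1$, $a_{i0}\ge0$, $a_{ij}\ge 0$ and $\pi_i>0$ for $i,j=1,\ldots,n$. For $u\in(0,\infty)^n$ define the matrices $A(u),H(u)\in\mathbb{R}^{n\times n}$ by $$A_{ij}(u)=\delta_{ij}a_{i0}+\delta_{ij}\sum_{k=1}^na_{ik}u_k+a_{ij}u_i,\qquad H_{ij}(u)=\delta_{ij}\pi_iu_i^{-2}.$$ Then for all $z\in\mathbb{R}^n$ and $u\in(0,\infty)^n$, $$z^TH(u)A(u)z\ge\sum_{i=1}^n\pi_ia_{i0}\frac{z_i^2}{u_i^2}+\frac14\sum_{i=1}^n\Big(8\pi_ia_{ii}-\sum_{j=1,\,j\ne i}^n\pi_ja_{ji}\Big)\frac{z_i^2}{u_i}.$$
   Context: $\delta_{ij}$ is the Kronecker symbol. $H(u)$ is the Hessian of $h(u)=\sum_i\pi_i(u_i-\log u_i)$. *)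

theory Defs
  imports "HOL-Analysis.Analysis"
begin

definition kron :: "'n \<Rightarrow> 'n \<Rightarrow> real" where
  "kron i j = (if i = j then 1 else 0)"

definition Amat :: "real ^ 'n \<Rightarrow> real ^ 'n ^ 'n \<Rightarrow> real ^ 'n \<Rightarrow> real ^ 'n ^ 'n" where
  "Amat a0 a u = (\<chi> i j. kron i j * a0 $ i + kron i j * (\<Sum>k\<in>UNIV. a $ i $ k * u $ k)
                       + a $ i $ j * u $ i)"

text \<open>H(u)_ij = delta_ij pi_i u_i^(-2), the Hessian of h(u) = sum_i pi_i (u_i - log u_i).\<close>
definition Hmat :: "real ^ 'n \<Rightarrow> real ^ 'n \<Rightarrow> real ^ 'n ^ 'n" where
  "Hmat p u = (\<chi> i j. kron i j * p $ i / (u $ i)\<^sup>2)"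

end

theory Submission
  imports Defs
begin

lemma HA_entry:
  "(Hmat p u ** Amat a0 a u) $ i $ j = p $ i / (u $ i)\<^sup>2 * (Amat a0 a u) $ i $ j"
proof -
  have "(\<Sum>k\<in>UNIV. kron i k * p $ i / (u $ i)\<^sup>2 * Amat a0 a u $ k $ j)
     = (\<Sum>k\<in>UNIV. if k = i then p $ i / (u $ i)\<^sup>2 * Amat a0 a u $ k $ j else 0)"
    by (rule sum.cong) (auto simp: kron_def)
  then show ?thesis unfolding matrix_matrix_mult_def Hmat_def by simp
qed

lemma lhs_expand:
  assumes nz: "\<And>i. u $ i \<noteq> 0"
  shows "z \<bullet> ((Hmat p u ** Amat a0 a u) *v z) =
   (\<Sum>i\<in>UNIV. p $ i * a0 $ i * (z $ i)\<^sup>2 / (u $ i)\<^sup>2)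
   + (\<Sum>i\<in>UNIV. \<Sum>j\<in>UNIV. p $ i * a $ i $ j * u $ j * (z $ i)\<^sup>2 / (u $ i)\<^sup>2
        + p $ i * a $ i $ j * z $ i * z $ j / u $ i)"
proof -
  have "z \<bullet> ((Hmat p u ** Amat a0 a u) *v z) =
    (\<Sum>i\<in>UNIV. z $ i * (\<Sum>j\<in>UNIV. p $ i / (u $ i)\<^sup>2 * (Amat a0 a u) $ i $ j * z $ j))"
    by (simp add: inner_vec_def matrix_vector_mult_def HA_entry mult.commute)
  also have "\<dots> = (\<Sum>i\<in>UNIV. p $ i * a0 $ i * (z $ i)\<^sup>2 / (u $ i)\<^sup>2
     + (\<Sum>j\<in>UNIV. p $ i * a $ i $ j * u $ j * (z $ i)\<^sup>2 / (u $ i)\<^sup>2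
        + p $ i * a $ i $ j * z $ i * z $ j / u $ i))"
  proof (rule sum.cong[OF refl])
    fix i
    have "(\<Sum>j\<in>UNIV. p $ i / (u $ i)\<^sup>2 * (Amat a0 a u) $ i $ j * z $ j)
      = (\<Sum>j\<in>UNIV. kron i j * (p $ i / (u $ i)\<^sup>2 * (a0 $ i + (\<Sum>k\<in>UNIV. a $ i $ k * u $ k)) * z $ j))
        + (\<Sum>j\<in>UNIV. p $ i / (u $ i)\<^sup>2 * a $ i $ j * u $ i * z $ j)"
      unfolding Amat_def by (simp add: sum.distrib[symmetric] algebra_simps)
    also have "\<dots> = p $ i / (u $ i)\<^sup>2 * (a0 $ i + (\<Sum>k\<in>UNIV. a $ i $ k * u $ k)) * z $ i
        + (\<Sum>j\<in>UNIV. p $ i / (u $ i)\<^sup>2 * a $ i $ j * u $ i * z $ j)"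
    proof -
      have "(\<Sum>j\<in>UNIV. kron i j * (p $ i / (u $ i)\<^sup>2 * (a0 $ i + (\<Sum>k\<in>UNIV. a $ i $ k * u $ k)) * z $ j))
        = (\<Sum>j\<in>UNIV. if j = i then p $ i / (u $ i)\<^sup>2 * (a0 $ i + (\<Sum>k\<in>UNIV. a $ i $ k * u $ k)) * z $ j else 0)"
        by (rule sum.cong) (auto simp: kron_def)
      then show ?thesis by simp
    qed
    finally have e: "(\<Sum>j\<in>UNIV. p $ i / (u $ i)\<^sup>2 * (Amat a0 a u) $ i $ j * z $ j) = \<dots>" .
    show "z $ i * (\<Sum>j\<in>UNIV. p $ i / (u $ i)\<^sup>2 * (Amat a0 a u) $ i $ j * z $ j) =
      p $ i * a0 $ i * (z $ i)\<^sup>2 / (u $ i)\<^sup>2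
     + (\<Sum>j\<in>UNIV. p $ i * a $ i $ j * u $ j * (z $ i)\<^sup>2 / (u $ i)\<^sup>2
        + p $ i * a $ i $ j * z $ i * z $ j / u $ i)"
      unfolding e
      using nz[of i] by (simp add: sum.distrib sum_distrib_left sum_divide_distrib algebra_simps power2_eq_square)
  qed
  finally show ?thesis by (simp add: sum.distrib)
qed


lemma pointwise:
  fixes P A U V X Y :: real
  assumes "P > 0" "A \<ge> 0" "U > 0" "V > 0"
  shows "P * A * V * X\<^sup>2 / U\<^sup>2 + P * A * X * Y / U \<ge> - (1/4) * (P * A * Y\<^sup>2 / V)"
proof -
  have "0 \<le> P * A * (V * X / U + Y / 2)\<^sup>2 / V" using assms by simp
  also have "\<dots> = P * A * V * X\<^sup>2 / U\<^sup>2 + P * A * X * Y / U + (1/4) * (P * A * Y\<^sup>2 / V)"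
    using assms by (simp add: field_simps power2_eq_square)
  finally show ?thesis by simp
qed

theorem lemma3:
  fixes a0 :: "real ^ 'n" and a :: "real ^ 'n ^ 'n" and p :: "real ^ 'n"
    and z u :: "real ^ 'n"
  assumes a0_nonneg: "\<And>i. a0 $ i \<ge> 0"
    and a_nonneg: "\<And>i j. a $ i $ j \<ge> 0"
    and p_pos: "\<And>i. p $ i > 0"
    and u_pos: "\<And>i. u $ i > 0"
  shows "z \<bullet> ((Hmat p u ** Amat a0 a u) *v z)
         \<ge> (\<Sum>i\<in>UNIV. p $ i * a0 $ i * (z $ i)\<^sup>2 / (u $ i)\<^sup>2)
           + 1/4 * (\<Sum>i\<in>UNIV. (8 * p $ i * a $ i $ i
                  - (\<Sum>j\<in>UNIV - {i}. p $ j * a $ j $ i)) * (z $ i)\<^sup>2 / u $ i)"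
proof -
  define T where "T i j = p $ i * a $ i $ j * u $ j * (z $ i)\<^sup>2 / (u $ i)\<^sup>2
        + p $ i * a $ i $ j * z $ i * z $ j / u $ i" for i j
  define R where "R i j = (if i = j then 2 * p $ i * a $ i $ i * (z $ i)\<^sup>2 / u $ i
        else - (1/4) * (p $ i * a $ i $ j * (z $ j)\<^sup>2 / u $ j))" for i j
  have nz: "\<And>i. u $ i \<noteq> 0" using u_pos by (metis less_irrefl)
  have TR: "R i j \<le> T i j" for i j
  proof (cases "i = j")
    case True
    then show ?thesis using nz[of i] unfolding R_def T_def
      by (simp add: field_simps power2_eq_square)
  next
    case False
    then show ?thesis unfolding R_def T_def
      using pointwise[OF p_pos[of i] a_nonneg[of i j] u_pos[of i] u_pos[of j]] by simp
  qed
  have "(\<Sum>i\<in>UNIV. \<Sum>j\<in>UNIV. R i j) \<le> (\<Sum>i\<in>UNIV. \<Sum>j\<in>UNIV. T i j)"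
    by (intro sum_mono TR)
  moreover have "(\<Sum>i\<in>UNIV. \<Sum>j\<in>UNIV. R i j) = (\<Sum>j\<in>UNIV. \<Sum>i\<in>UNIV. R i j)"
    by (rule sum.swap)
  moreover have "(\<Sum>i\<in>UNIV. R i j) = 1/4 * ((8 * p $ j * a $ j $ j
                  - (\<Sum>i\<in>UNIV - {j}. p $ i * a $ i $ j)) * (z $ j)\<^sup>2 / u $ j)" for j
  proof -
    have "(\<Sum>i\<in>UNIV. R i j) = R j j + (\<Sum>i\<in>UNIV - {j}. R i j)"
      by (simp add: sum.remove)
    also have "(\<Sum>i\<in>UNIV - {j}. R i j) = (\<Sum>i\<in>UNIV - {j}. - (1/4) * (p $ i * a $ i $ j * (z $ j)\<^sup>2 / u $ j))"
      by (rule sum.cong) (auto simp: R_def)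
    also have "\<dots> = - (1/4) * ((\<Sum>i\<in>UNIV - {j}. p $ i * a $ i $ j) * (z $ j)\<^sup>2 / u $ j)"
      by (simp add: sum_distrib_left sum_distrib_right sum_divide_distrib)
    finally show ?thesis
      by (simp add: R_def algebra_simps diff_divide_distrib)
  qed
  ultimately have "1/4 * (\<Sum>i\<in>UNIV. (8 * p $ i * a $ i $ i
                  - (\<Sum>j\<in>UNIV - {i}. p $ j * a $ j $ i)) * (z $ i)\<^sup>2 / u $ i)
     \<le> (\<Sum>i\<in>UNIV. \<Sum>j\<in>UNIV. T i j)"
    by (simp add: sum_distrib_left)
  then show ?thesis
    unfolding lhs_expand[OF nz] T_def by simp
qed

end
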